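(* Let $f:\mathbb{R}^n\to\mathbb{R}\cup\{+\infty\}$ be a closed proper convex function, $A\in\mathbb{R}^{m\times n}$, $b\in\mathbb{R}^m$, with $\mathrm{ri}(\mathrm{dom}\,f)\cap\mathrm{im}(A)\neq\emptyset$, and consider the problem $\min_x f(x)$ subject to $Ax=b$, with Lagrangian $L(x,\lambda)=f(x)-\langle\lambda,Ax-b\rangle$. Let $(x^*,\lambda^* )$ be a saddle point of $L$ (i.e. $L(x^*,\lambda)\leqslant L(x^*,\lambda^* )\leqslant L(x,\lambda^* )$ for all $x,\lambda$). Let $H\in\mathbb{R}^{m\times m}$ be symmetric positive definite and $(A_k),(a_k),(b_k),(c_k)$ be real sequences with $a_k>0$, $c_k>0$ for all $k$, $b_k>0$ for $k\geqslant1$, satisfying $$A_{k+1}-A_k\leqslant a_k,\quad A_k=a_kb_k,\quad A_0=b_0=0,\quad c_k\geqslant a_k.$$ Let $\lambda_0\in\mathbb{R}^m$, $z_0=\lambda_0$, and for $k\geqslant0$ $$\tilde\lambda_{k+1}=\frac{1}{b_k+1}z_k+\frac{b_k}{b_k+1}\lambda_k,\qquad x_{k+1}\in\arg\min_x\Big\{f(x)-\langle\tilde\lambda_{k+1},Ax-b\rangle+\frac{c_k}{2(b_k+1)}\|Ax-b\|_H^2\Big\},$$ $$\lambda_{k+1}=\tilde\lambda_{k+1}-\frac{c_k}{b_k+1}H(Ax_{k+1}-b),\qquad z_{k+1}=z_k-a_kH(Ax_{k+1}-b),$$ where the minimizers are assumed to exist. Then for every $k\geqslant1$, $$f(x^*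 )-f(x_k)+\langle\lambda_k,Ax_k-b\rangle\leqslant\frac{\|\lambda_0-\lambda^*\|^2_{H^{-1}}}{2A_k},$$ and for every $k\geqslant0$, $$\min_{0\leqslant j\leqslant k}\|Ax_{j+1}-b\|_H^2\leqslant\frac{\|\lambda_0-\lambda^*\|^2_{H^{-1}}}{\sum_{j=0}^ka_j^2}.$$
   Context: $\|u\|_M^2=u^{\mathrm T}Mu$ for a symmetric positive definite matrix $M$; $\mathrm{ri}$ denotes relative interior and $\mathrm{im}(A)$ the range of $A$. *)

theory Defs
  imports "HOL-Analysis.Analysis" "HOL-Library.Extended_Real"
begin

text \<open>Extended-real-valued functions f : R^n -> R \<union> {+inf}, modelled with values in ereal
  (properness excludes -inf).\<close>

definition effdom :: "('a \<Rightarrow> ereal) \<Rightarrow> 'a set" where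
  "effdom f = {x. f x < \<infinity>}"

definition epigraph :: "('a \<Rightarrow> ereal) \<Rightarrow> ('a \<times> real) set" where
  "epigraph f = {(x, t). f x \<le> ereal t}"

definition proper_fun :: "('a \<Rightarrow> ereal) \<Rightarrow> bool" where
  "proper_fun f \<longleftrightarrow> (\<forall>x. f x \<noteq> -\<infinity>) \<and> effdom f \<noteq> {}"

definition convex_fun :: "('a::real_vector \<Rightarrow> ereal) \<Rightarrow> bool" where
  "convex_fun f \<longleftrightarrow> convex (epigraph f)"

definition closed_fun :: "('a::topological_space \<Rightarrow> ereal) \<Rightarrow> bool" where
  "closed_fun f \<longleftrightarrow> closed (epigraph f)"

definition Mnormsq :: "real^'m^'m \<Rightarrow> real^'m \<Rightarrow> real" where
  "Mnormsq M u = u \<bullet> (M *v u)"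

definition sym_pos_def :: "real^'m^'m \<Rightarrow> bool" where
  "sym_pos_def M \<longleftrightarrow> transpose M = M \<and> (\<forall>u. u \<noteq> 0 \<longrightarrow> u \<bullet> (M *v u) > 0)"

definition lagr :: "(real^'n \<Rightarrow> ereal) \<Rightarrow> real^'n^'m \<Rightarrow> real^'m \<Rightarrow> real^'n \<Rightarrow> real^'m \<Rightarrow> ereal" where
  "lagr f A b x l = f x - ereal (l \<bullet> (A *v x - b))"

end

theory Submission
  imports Defs
begin

lemma sym_dot:
  fixes H :: "real^'m^'m"
  assumes "transpose H = H"
  shows "u \<bullet> (H *v v) = v \<bullet> (H *v u)"
proof -
  have "u \<bullet> (H *v v) = (u v* H) \<bullet> v" by (simp add: dot_lmul_matrix)
  also have "u v* H = transpose H *v u" by simp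
  also have "\<dots> = H *v u" using assms by simp
  finally show ?thesis by (simp add: inner_commute)
qed

lemma spd_inv:
  fixes H :: "real^'m^'m"
  assumes "sym_pos_def H"
  shows "matrix_inv H ** H = mat 1 \<and> H ** matrix_inv H = mat 1"
proof -
  have "\<forall>x. H *v x = 0 \<longrightarrow> x = 0"
    using assms unfolding sym_pos_def_def by (metis inner_zero_right less_irrefl)
  then have "\<exists>B. B ** H = mat 1" using matrix_left_invertible_ker by blast
  then have "invertible H" using invertible_left_inverse by blast
  then obtain B where "H ** B = mat 1 \<and> B ** H = mat 1" unfolding invertible_def by blast
  then have "H ** matrix_inv H = mat 1 \<and> matrix_inv H ** H = mat 1"
    unfolding matrix_inv_def by (rule someI)
  then show ?thesis by blast
qed

lemma ereal_mono_aux: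
  assumes "a \<le> ereal v"
  shows "a - ereal c + ereal d \<le> ereal (v - c + d)"
  using assms by (cases a) auto

lemma lin_aux:
  fixes X Y B C G D1 P L D2 M S E Z K W T Qk :: real
  assumes "X \<le> Y" "Y = B + C" "B \<le> G + D1" "D1 = P - L" "C \<le> D2" "D2 = M - S"
    "E = P + M" "E = Z + L - K" "W \<le> K" "T = 2 * Z - 2 * S"
  shows "X + (Qk - T + W) / 2 + W / 2 \<le> G + Qk / 2"
proof -
  have "(Qk - T + W) / 2 = Qk / 2 - T / 2 + W / 2" by simp
  then show ?thesis using assms by linarith
qed

lemma subgrad:
  fixes f :: "real^'n \<Rightarrow> ereal" and A :: "real^'n^'m" and H :: "real^'m^'m"
  assumes cvx: "convex_fun f" and fin_n: "f xn = ereal Fn" and fin_u: "f u = ereal Fu"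
    and symH: "transpose H = H"
    and mn: "\<forall>y. f xn - ereal (l \<bullet> (A *v xn - b)) + ereal (q * Mnormsq H (A *v xn - b))
               \<le> f y - ereal (l \<bullet> (A *v y - b)) + ereal (q * Mnormsq H (A *v y - b))"
  shows "Fn + (l - (2*q) *\<^sub>R (H *v (A *v xn - b))) \<bullet> (A *v u - A *v xn) \<le> Fu"
proof -
  define p where "p = A *v xn - b"
  define d where "d = A *v u - A *v xn"
  define D where "D = Fu - Fn - l \<bullet> d + q * (p \<bullet> (H *v d) + d \<bullet> (H *v p))"
  define K where "K = q * (d \<bullet> (H *v d))"
  have key: "0 \<le> t * D + t^2 * K" if t0: "0 < t" and t1: "t \<le> 1" for t
  proof -
    define y where "y = (1 - t) *\<^sub>R xn + t *\<^sub>R u"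
    have e1: "(xn, Fn) \<in> epigraph f" "(u, Fu) \<in> epigraph f"
      using fin_n fin_u unfolding epigraph_def by auto
    have "(1 - t) *\<^sub>R (xn, Fn) + t *\<^sub>R (u, Fu) \<in> epigraph f"
      using cvx e1 t0 t1 unfolding convex_fun_def by (intro convexD) auto
    then have fy: "f y \<le> ereal ((1 - t) * Fn + t * Fu)"
      unfolding epigraph_def y_def by simp
    have Ay: "A *v y - b = p + t *\<^sub>R d"
      unfolding y_def p_def d_def by (simp add: algebra_simps)
    have "ereal (Fn - l \<bullet> p + q * Mnormsq H p) \<le> f y - ereal (l \<bullet> (p + t *\<^sub>R d)) + ereal (q * Mnormsq H (p + t *\<^sub>R d))"
      using mn[rule_format, of y] fin_n unfolding Ay p_def by simp
    also have "\<dots> \<le> ereal ((1 - t) * Fn + t * Fu - l \<bullet> (p + t *\<^sub>R d) + q * Mnormsq H (p + t *\<^sub>R d))"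
      by (rule ereal_mono_aux[OF fy])
    finally have ineq: "Fn - l \<bullet> p + q * Mnormsq H p \<le> (1 - t) * Fn + t * Fu - l \<bullet> (p + t *\<^sub>R d) + q * Mnormsq H (p + t *\<^sub>R d)"
      by simp
    have N: "Mnormsq H (p + t *\<^sub>R d) = Mnormsq H p + t * (p \<bullet> (H *v d) + d \<bullet> (H *v p)) + t^2 * (d \<bullet> (H *v d))"
      unfolding Mnormsq_def by (simp add: matrix_vector_right_distrib matrix_vector_mult_scaleR inner_add_left inner_add_right algebra_simps power2_eq_square)
    have L: "l \<bullet> (p + t *\<^sub>R d) = l \<bullet> p + t * (l \<bullet> d)" by (simp add: inner_add_right)
    have "(1 - t) * Fn + t * Fu - l \<bullet> (p + t *\<^sub>R d) + q * Mnormsq H (p + t *\<^sub>R d) - (Fn - l \<bullet> p + q * Mnormsq H p)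
          = t * D + t^2 * K"
      unfolding N L D_def K_def by (simp add: algebra_simps power2_eq_square)
    then show ?thesis using ineq by linarith
  qed
  have D0: "0 \<le> D"
  proof (rule ccontr)
    assume "\<not> 0 \<le> D"
    then have Dn: "D < 0" by simp
    define t where "t = min 1 (- D / (2 * (\<bar>K\<bar> + 1)))"
    have "0 < - D / (2 * (\<bar>K\<bar> + 1))" using Dn by (intro divide_pos_pos) auto
    then have t0: "0 < t" unfolding t_def by simp
    have t1: "t \<le> 1" unfolding t_def by simp
    have tle: "t \<le> - D / (2 * (\<bar>K\<bar> + 1))" unfolding t_def by simp
    have "t * (\<bar>K\<bar> + 1) \<le> - D / 2"
      using tle by (simp add: field_simps)
    then have tk: "t * \<bar>K\<bar> < - D" using t0 Dn by (simp add: algebra_simps)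
    have "0 \<le> t * D + t^2 * K" using key t0 t1 by blast
    also have "t * D + t^2 * K = t * (D + t * K)" by (simp add: algebra_simps power2_eq_square)
    finally have "0 \<le> D + t * K" using t0 by (simp add: zero_le_mult_iff)
    moreover have "t * K \<le> t * \<bar>K\<bar>" using t0 by (simp add: mult_left_mono)
    ultimately show False using tk by linarith
  qed
  have s1: "p \<bullet> (H *v d) = d \<bullet> (H *v p)" using sym_dot[OF symH] by blast
  have "(l - (2*q) *\<^sub>R (H *v p)) \<bullet> d = l \<bullet> d - 2 * q * (d \<bullet> (H *v p))"
    by (simp add: inner_diff_left inner_commute[of l d] inner_commute[of "H *v p" d])
  moreover have "q * (p \<bullet> (H *v d) + d \<bullet> (H *v p)) = 2 * q * (d \<bullet> (H *v p))" using s1 by simp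
  ultimately show ?thesis using D0 unfolding D_def p_def[symmetric] d_def[symmetric] by linarith
qed

theorem corollary1:
  fixes f :: "real^'n \<Rightarrow> ereal"
    and A :: "real^'n^'m" and b :: "real^'m"
    and H :: "real^'m^'m"
    and xs :: "real^'n" and ls :: "real^'m"
    and AA a bb c :: "nat \<Rightarrow> real"
    and x :: "nat \<Rightarrow> real^'n"
    and lam lt z :: "nat \<Rightarrow> real^'m"
  assumes f_closed: "closed_fun f" and f_proper: "proper_fun f" and f_convex: "convex_fun f"
    and qual: "\<exists>y\<in>rel_interior (effdom f). A *v y = b"
    and saddle: "\<forall>y l. lagr f A b xs l \<le> lagr f A b xs ls \<and> lagr f A b xs ls \<le> lagr f A b y ls"
    and H_spd: "sym_pos_def H"
    and a_pos: "\<forall>k. a k > 0" and c_pos: "\<forall>k. c k > 0" and b_pos: "\<forall>k\<ge>1. bb k > 0"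
    and A_step: "\<forall>k. AA (Suc k) - AA k \<le> a k"
    and A_eq: "\<forall>k. AA k = a k * bb k"
    and A0: "AA 0 = 0" and b0: "bb 0 = 0"
    and c_ge: "\<forall>k. c k \<ge> a k"
    and z0: "z 0 = lam 0"
    and lt_def: "\<forall>k. lt (Suc k) = (1 / (bb k + 1)) *\<^sub>R z k + (bb k / (bb k + 1)) *\<^sub>R lam k"
    and x_min: "\<forall>k y. f (x (Suc k)) - ereal (lt (Suc k) \<bullet> (A *v x (Suc k) - b))
                        + ereal (c k / (2 * (bb k + 1)) * Mnormsq H (A *v x (Suc k) - b))
                   \<le> f y - ereal (lt (Suc k) \<bullet> (A *v y - b))
                        + ereal (c k / (2 * (bb k + 1)) * Mnormsq H (A *v y - b))"
    and lam_def: "\<forall>k. lam (Suc k) = lt (Suc k) - (c k / (bb k + 1)) *\<^sub>R (H *v (A *v x (Suc k) - b))"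
    and z_def: "\<forall>k. z (Suc k) = z k - a k *\<^sub>R (H *v (A *v x (Suc k) - b))"
  shows "(\<forall>k\<ge>1. f xs - f (x k) + ereal (lam k \<bullet> (A *v x k - b))
            \<le> ereal (Mnormsq (matrix_inv H) (lam 0 - ls) / (2 * AA k)))
       \<and> (\<forall>k. Min ((\<lambda>j. Mnormsq H (A *v x (Suc j) - b)) ` {0..k})
            \<le> Mnormsq (matrix_inv H) (lam 0 - ls) / (\<Sum>j=0..k. (a j)\<^sup>2))"
proof -
  have symH: "transpose H = H" using H_spd unfolding sym_pos_def_def by blast
  have posH: "0 \<le> u \<bullet> (H *v u)" for u
    using H_spd unfolding sym_pos_def_def by (cases "u = 0") (auto intro: less_imp_le)
  define Hi where "Hi = matrix_inv H"
  have HiH: "Hi ** H = mat 1" and HHi: "H ** Hi = mat 1" using spd_inv[OF H_spd] unfolding Hi_def by auto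
  have HiHv: "Hi *v (H *v v) = v" for v using HiH by (simp add: matrix_vector_mul_assoc)
  have HHiv: "H *v (Hi *v v) = v" for v using HHi by (simp add: matrix_vector_mul_assoc)
  have Hsw: "(H *v r) \<bullet> y = r \<bullet> (H *v y)" for r y
    using sym_dot[OF symH, of r y] by (simp add: inner_commute)
  have Qnn: "0 \<le> Mnormsq Hi w" for w
  proof -
    have "Mnormsq Hi w = (H *v (Hi *v w)) \<bullet> (Hi *v w)" unfolding Mnormsq_def HHiv ..
    also have "\<dots> = (Hi *v w) \<bullet> (H *v (Hi *v w))" by (simp add: inner_commute)
    finally show ?thesis using posH by simp
  qed
  have noninf: "\<And>y. f y \<noteq> -\<infinity>" using f_proper unfolding proper_fun_def by blast
  obtain y0 where y0: "f y0 < \<infinity>" using f_proper unfolding proper_fun_def effdom_def by blast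
  have fin_x: "f (x (Suc k)) \<noteq> \<infinity>" for k
  proof
    assume inf: "f (x (Suc k)) = \<infinity>"
    have "f (x (Suc k)) - ereal (lt (Suc k) \<bullet> (A *v x (Suc k) - b))
                        + ereal (c k / (2 * (bb k + 1)) * Mnormsq H (A *v x (Suc k) - b))
                   \<le> f y0 - ereal (lt (Suc k) \<bullet> (A *v y0 - b))
                        + ereal (c k / (2 * (bb k + 1)) * Mnormsq H (A *v y0 - b))"
      using x_min by blast
    then have "f y0 - ereal (lt (Suc k) \<bullet> (A *v y0 - b))
                        + ereal (c k / (2 * (bb k + 1)) * Mnormsq H (A *v y0 - b)) = \<infinity>"
      using inf by simp
    then show False using y0 by (cases "f y0") auto
  qed
  have fin_s: "f xs \<noteq> \<infinity>"
  proof
    assume inf: "f xs = \<infinity>"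
    have "lagr f A b xs ls \<le> lagr f A b y0 ls" using saddle by blast
    then show False using inf y0 unfolding lagr_def by (cases "f y0") auto
  qed
  define F where "F k = real_of_ereal (f (x k))" for k
  define Fs where "Fs = real_of_ereal (f xs)"
  have fxk: "f (x (Suc k)) = ereal (F (Suc k))" for k
    unfolding F_def using fin_x[of k] noninf[of "x (Suc k)"] by (cases "f (x (Suc k))") auto
  have fxs: "f xs = ereal Fs"
    unfolding Fs_def using fin_s noninf[of xs] by (cases "f xs") auto
  have Axs: "A *v xs - b = 0"
  proof -
    define r where "r = A *v xs - b"
    have "lagr f A b xs (ls - r) \<le> lagr f A b xs ls" using saddle by blast
    then have "Fs - (ls - r) \<bullet> r \<le> Fs - ls \<bullet> r" unfolding lagr_def fxs r_def by simp
    moreover have "(ls - r) \<bullet> r = ls \<bullet> r - r \<bullet> r" by (simp add: inner_diff_left)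
    ultimately have "r \<bullet> r \<le> 0" by linarith
    then show ?thesis unfolding r_def[symmetric] by (meson antisym inner_eq_zero_iff inner_ge_zero)
  qed
  have bbnn: "0 \<le> bb k" for k using b_pos b0 by (cases k) (auto intro: less_imp_le)
  have S: "F (Suc k) + lam (Suc k) \<bullet> (A *v u - A *v x (Suc k)) \<le> Fu" if fu: "f u = ereal Fu" for k u Fu
  proof -
    define q where "q = c k / (2 * (bb k + 1))"
    have q2: "2 * q = c k / (bb k + 1)" using bbnn[of k] unfolding q_def by (simp add: field_simps)
    have "F (Suc k) + (lt (Suc k) - (2*q) *\<^sub>R (H *v (A *v x (Suc k) - b))) \<bullet> (A *v u - A *v x (Suc k)) \<le> Fu"
      by (rule subgrad[OF f_convex fxk fu symH]) (use x_min in \<open>simp add: q_def\<close>)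
    then show ?thesis using lam_def q2 by simp
  qed
  define r where "r k = A *v x k - b" for k
  define N where "N k = Mnormsq H (A *v x k - b)" for k
  define gap where "gap k = Fs - F k + lam k \<bullet> r k" for k
  define Q where "Q k = Mnormsq Hi (z k - ls)" for k
  define E where "E k = AA k * gap k + Q k / 2" for k
  have Nnn: "0 \<le> N k" for k unfolding N_def Mnormsq_def using posH by simp
  have h3: "0 \<le> gap (Suc k)" for k
    using S[OF fxs, of k] Axs unfolding gap_def r_def by (simp add: inner_diff_right algebra_simps)
  have step: "E (Suc k) + (a k)^2 / 2 * N (Suc k) \<le> E k" for k
  proof -
    define n where "n = Suc k"
    define \<alpha> where "\<alpha> = a k"
    define \<beta> where "\<beta> = bb k"
    define cc where "cc = c k"
    define ln where "ln = lam n \<bullet> r n"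
    define lk where "lk = lam k \<bullet> r n"
    define sl where "sl = ls \<bullet> r n"
    define zr where "zr = z k \<bullet> r n"
    define gn where "gn = gap n"
    define gk where "gk = gap k"
    have al: "0 < \<alpha>" using a_pos unfolding \<alpha>_def by blast
    have be: "0 \<le> \<beta>" using bbnn unfolding \<beta>_def by blast
    have ca: "\<alpha> \<le> cc" using c_ge unfolding \<alpha>_def cc_def by blast
    have h1: "Fs \<le> F n - sl"
    proof -
      have "lagr f A b xs ls \<le> lagr f A b (x n) ls" using saddle by blast
      then show ?thesis unfolding lagr_def fxs n_def fxk sl_def r_def using Axs by simp
    qed
    have p1: "AA n * gn \<le> (AA k + \<alpha>) * gn"
    proof (rule mult_right_mono)
      show "AA n \<le> AA k + \<alpha>" using A_step[rule_format, of k] unfolding n_def \<alpha>_def by linarith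
      show "0 \<le> gn" using h3[of k] unfolding gn_def n_def .
    qed
    have p2: "\<alpha> * \<beta> * gn \<le> \<alpha> * \<beta> * gk + \<alpha> * \<beta> * (ln - lk)"
    proof (cases k)
      case 0 then show ?thesis using b0 unfolding \<beta>_def by simp
    next
      case (Suc k')
      have "F k + lam k \<bullet> (A *v x n - A *v x k) \<le> F n"
        using S[OF fxk[of k], of k'] unfolding Suc n_def .
      then have "gn \<le> gk + (ln - lk)"
        unfolding gn_def gk_def gap_def ln_def lk_def r_def by (simp add: inner_diff_right)
      then show ?thesis using al be
        by (metis distrib_left mult_nonneg_nonneg mult_left_mono less_imp_le)
    qed
    have p3: "\<alpha> * gn \<le> \<alpha> * (ln - sl)"
      using h1 al unfolding gn_def gap_def ln_def by (intro mult_left_mono) auto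
    have p4: "(\<beta> + 1) * ln = zr + \<beta> * lk - cc * N n"
    proof -
      have b1: "\<beta> + 1 \<noteq> 0" using be by simp
      have "lam n = (1 / (\<beta> + 1)) *\<^sub>R z k + (\<beta> / (\<beta> + 1)) *\<^sub>R lam k - (cc / (\<beta> + 1)) *\<^sub>R (H *v r n)"
        using lam_def lt_def unfolding n_def \<beta>_def cc_def r_def by simp
      then have lneq: "ln = (1 / (\<beta> + 1)) * zr + (\<beta> / (\<beta> + 1)) * lk - (cc / (\<beta> + 1)) * N n"
        unfolding ln_def zr_def lk_def N_def Mnormsq_def r_def
        by (simp add: inner_diff_left inner_add_left Hsw)
      define P where "P = 1 / (\<beta> + 1)"
      define Q where "Q = \<beta> / (\<beta> + 1)"
      define R where "R = cc / (\<beta> + 1)"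
      have "(\<beta> + 1) * ln = ((\<beta> + 1) * P) * zr + ((\<beta> + 1) * Q) * lk - ((\<beta> + 1) * R) * N n"
      proof -
        have lneq': "ln = P * zr + Q * lk - R * N n" using lneq unfolding P_def Q_def R_def .
        show ?thesis unfolding lneq' by (simp add: algebra_simps)
      qed
      moreover have "(\<beta> + 1) * P = 1" "(\<beta> + 1) * Q = \<beta>" "(\<beta> + 1) * R = cc"
        using b1 unfolding P_def Q_def R_def by simp_all
      ultimately show ?thesis by simp
    qed
    have h7: "Q n = Q k - 2 * \<alpha> * (zr - sl) + \<alpha>^2 * N n"
    proof -
      define w where "w = z k - ls"
      define v where "v = H *v r n"
      have zn: "z n - ls = w - \<alpha> *\<^sub>R v" using z_def unfolding n_def w_def v_def \<alpha>_def r_def by simp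
      have e1: "Hi *v v = r n" unfolding v_def HiHv ..
      have e2: "v \<bullet> (Hi *v w) = r n \<bullet> w" unfolding v_def Hsw HHiv ..
      have e3: "v \<bullet> r n = N n" unfolding v_def N_def Mnormsq_def r_def Hsw by simp
      have e4: "w \<bullet> r n = zr - sl" unfolding w_def zr_def sl_def by (simp add: inner_diff_left)
      have "Q n = w \<bullet> (Hi *v w) - \<alpha> * (w \<bullet> (Hi *v v)) - \<alpha> * (v \<bullet> (Hi *v w)) + \<alpha>^2 * (v \<bullet> (Hi *v v))"
        unfolding Q_def zn Mnormsq_def
        by (simp add: matrix_vector_mult_diff_distrib matrix_vector_mult_scaleR inner_diff_left inner_diff_right algebra_simps power2_eq_square)
      also have "\<dots> = Q k - 2 * \<alpha> * (zr - sl) + \<alpha>^2 * N n"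
        unfolding e1 e2 e3 Q_def w_def[symmetric] Mnormsq_def e4[symmetric]
        by (simp add: inner_commute[of "r n"] algebra_simps)
      finally show ?thesis .
    qed
    have AAk: "AA k = \<alpha> * \<beta>" using A_eq unfolding \<alpha>_def \<beta>_def by blast
    have q1: "\<alpha> * ((\<beta> + 1) * ln) = \<alpha> * \<beta> * ln + \<alpha> * ln" by (simp add: algebra_simps)
    have q2: "\<alpha> * ((\<beta> + 1) * ln) = \<alpha> * zr + \<alpha> * \<beta> * lk - \<alpha> * cc * N n"
      unfolding p4 by (simp add: algebra_simps)
    have q3: "\<alpha> * \<beta> * (ln - lk) = \<alpha> * \<beta> * ln - \<alpha> * \<beta> * lk" by (simp add: algebra_simps)
    have q4: "\<alpha> * (ln - sl) = \<alpha> * ln - \<alpha> * sl" by (simp add: algebra_simps)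
    have q5: "(AA k + \<alpha>) * gn = \<alpha> * \<beta> * gn + \<alpha> * gn" unfolding AAk by (simp add: algebra_simps)
    have q6: "\<alpha> * \<alpha> * N n \<le> \<alpha> * cc * N n"
      using al ca Nnn[of n] by (intro mult_right_mono mult_left_mono) auto
    have q7: "2 * \<alpha> * (zr - sl) = 2 * (\<alpha> * zr) - 2 * (\<alpha> * sl)" by (simp add: algebra_simps)
    have q8: "\<alpha>^2 = \<alpha> * \<alpha>" by (simp add: power2_eq_square)
    have "E n + \<alpha>^2 / 2 * N n \<le> E k"
    proof -
      have r1: "AA k * gk = \<alpha> * \<beta> * gk" using AAk by simp
      have r2: "\<alpha> * \<alpha> / 2 * N n = (\<alpha> * \<alpha> * N n) / 2" by simp
      show ?thesis
        unfolding E_def gn_def[symmetric] gk_def[symmetric] h7 q8 r2 r1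
        by (rule lin_aux[OF p1 q5 p2 q3 p3 q4 q1 q2 q6 q7])
    qed
    then show ?thesis unfolding n_def \<alpha>_def .
  qed
  define M where "M = Mnormsq (matrix_inv H) (lam 0 - ls)"
  have E0: "E 0 = M / 2" unfolding E_def Q_def M_def Hi_def using A0 z0 by simp
  have Egap: "AA k * gap k \<le> E k" for k unfolding E_def using Qnn[of "z k - ls"] Q_def by simp
  have AApos: "0 < AA (Suc k)" for k using A_eq a_pos b_pos by simp
  have Enn: "0 \<le> E (Suc k)" for k
    using Egap[of "Suc k"] AApos[of k] h3[of k] by (meson mult_nonneg_nonneg less_imp_le order_trans)
  have sumb: "E (Suc k) + (\<Sum>j=0..k. (a j)^2 / 2 * N (Suc j)) \<le> E 0" for k
  proof (induction k)
    case 0 then show ?case using step[of 0] by simp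
  next
    case (Suc k)
    have "E (Suc (Suc k)) + (\<Sum>j=0..Suc k. (a j)^2 / 2 * N (Suc j))
        = E (Suc (Suc k)) + (a (Suc k))^2 / 2 * N (Suc (Suc k)) + (\<Sum>j=0..k. (a j)^2 / 2 * N (Suc j))"
      by (simp add: sum.atLeast0_atMost_Suc)
    also have "\<dots> \<le> E (Suc k) + (\<Sum>j=0..k. (a j)^2 / 2 * N (Suc j))" using step[of "Suc k"] by linarith
    finally show ?case using Suc.IH by linarith
  qed
  have sumnn: "0 \<le> (\<Sum>j=0..k. (a j)^2 / 2 * N (Suc j))" for k
    using Nnn by (intro sum_nonneg) simp
  have part1: "f xs - f (x k) + ereal (lam k \<bullet> (A *v x k - b)) \<le> ereal (M / (2 * AA k))" if k1: "k \<ge> 1" for k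
  proof -
    obtain k' where k: "k = Suc k'" using k1 by (cases k) auto
    have "AA k * gap k \<le> M / 2" using Egap[of k] sumb[of k'] sumnn[of k'] E0 unfolding k by linarith
    then have "gap k \<le> M / (2 * AA k)" using AApos[of k'] unfolding k by (simp add: field_simps)
    moreover have "f xs - f (x k) + ereal (lam k \<bullet> (A *v x k - b)) = ereal (gap k)"
      unfolding k fxs fxk gap_def r_def by simp
    ultimately show ?thesis by simp
  qed
  have part2: "Min ((\<lambda>j. Mnormsq H (A *v x (Suc j) - b)) ` {0..k}) \<le> M / (\<Sum>j=0..k. (a j)\<^sup>2)" for k
  proof -
    define mn where "mn = Min ((\<lambda>j. Mnormsq H (A *v x (Suc j) - b)) ` {0..k})"
    have mle: "mn \<le> N (Suc j)" if "j \<in> {0..k}" for j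
      unfolding mn_def N_def using that by (intro Min_le) auto
    have spos: "0 < (\<Sum>j=0..k. (a j)\<^sup>2)"
    proof -
      have "(a 0)^2 \<le> (\<Sum>j=0..k. (a j)\<^sup>2)"
        by (rule member_le_sum) auto
      moreover have "0 < (a 0)^2" using a_pos[rule_format, of 0] by simp
      ultimately show ?thesis by linarith
    qed
    have "(\<Sum>j=0..k. (a j)\<^sup>2) * mn = (\<Sum>j=0..k. (a j)\<^sup>2 * mn)" by (simp add: sum_distrib_right)
    also have "\<dots> \<le> (\<Sum>j=0..k. (a j)\<^sup>2 * N (Suc j))"
      using mle by (intro sum_mono mult_left_mono) auto
    also have "\<dots> = 2 * (\<Sum>j=0..k. (a j)^2 / 2 * N (Suc j))"
      by (simp add: sum_distrib_left)
    also have "\<dots> \<le> M" using sumb[of k] Enn[of k] E0 by linarith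
    finally have "(\<Sum>j=0..k. (a j)\<^sup>2) * mn \<le> M" .
    then show ?thesis unfolding mn_def[symmetric] using spos by (simp add: pos_le_divide_eq mult.commute)
  qed
  show ?thesis using part1 part2 unfolding M_def by blast
qed

end
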